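(* Let $A$ be a centrally essential ring such that the factor ring $A/J(A)$ by the Jacobson radical is not commutative. Then the polynomial ring $A[x]$ (in a central indeterminate $x$) is centrally essential but is neither right quasi-invariant nor left quasi-invariant.
   Context: All rings are associative, unital and non-zero. $Z(A)$ denotes the center of a ring $A$. A ring $A$ is centrally essential if either $A$ is commutative or for every non-central element $a\in A$ there exist non-zero central elements $x,y\in Z(A)$ with $ax=y$. A ring is right (resp. left) quasi-invariant if every maximal right (resp. left) ideal of it is a two-sided ideal. *)

theory Defs
  imports "HOL-Algebra.Algebra"
begin

definition ring_center :: "('a, 'm) ring_scheme \<Rightarrow> 'a set" where
  "ring_center R = {z \<in> carrier R. \<forall>a \<in> carrier R. z \<otimes>\<^bsub>R\<^esub> a = a \<otimes>\<^bsub>R\<^esub> z}"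

definition mult_commutative :: "('a, 'm) ring_scheme \<Rightarrow> bool" where
  "mult_commutative R \<longleftrightarrow>
     (\<forall>a \<in> carrier R. \<forall>b \<in> carrier R. a \<otimes>\<^bsub>R\<^esub> b = b \<otimes>\<^bsub>R\<^esub> a)"

definition centrally_essential :: "('a, 'm) ring_scheme \<Rightarrow> bool" where
  "centrally_essential R \<longleftrightarrow>
     mult_commutative R \<or>
     (\<forall>a \<in> carrier R. a \<notin> ring_center R \<longrightarrow>
        (\<exists>x \<in> ring_center R. \<exists>y \<in> ring_center R.
           x \<noteq> \<zero>\<^bsub>R\<^esub> \<and> y \<noteq> \<zero>\<^bsub>R\<^esub> \<and> a \<otimes>\<^bsub>R\<^esub> x = y))"

definition right_ideal :: "'a set \<Rightarrow> ('a, 'm) ring_scheme \<Rightarrow> bool" where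
  "right_ideal I R \<longleftrightarrow> additive_subgroup I R \<and>
     (\<forall>a \<in> I. \<forall>r \<in> carrier R. a \<otimes>\<^bsub>R\<^esub> r \<in> I)"

definition left_ideal :: "'a set \<Rightarrow> ('a, 'm) ring_scheme \<Rightarrow> bool" where
  "left_ideal I R \<longleftrightarrow> additive_subgroup I R \<and>
     (\<forall>a \<in> I. \<forall>r \<in> carrier R. r \<otimes>\<^bsub>R\<^esub> a \<in> I)"

definition maximal_right_ideal :: "'a set \<Rightarrow> ('a, 'm) ring_scheme \<Rightarrow> bool" where
  "maximal_right_ideal M R \<longleftrightarrow> right_ideal M R \<and> M \<noteq> carrier R \<and>
     (\<forall>I. right_ideal I R \<and> M \<subseteq> I \<longrightarrow> I = M \<or> I = carrier R)"

definition maximal_left_ideal :: "'a set \<Rightarrow> ('a, 'm) ring_scheme \<Rightarrow> bool" where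
  "maximal_left_ideal M R \<longleftrightarrow> left_ideal M R \<and> M \<noteq> carrier R \<and>
     (\<forall>I. left_ideal I R \<and> M \<subseteq> I \<longrightarrow> I = M \<or> I = carrier R)"

definition right_quasi_invariant :: "('a, 'm) ring_scheme \<Rightarrow> bool" where
  "right_quasi_invariant R \<longleftrightarrow> (\<forall>M. maximal_right_ideal M R \<longrightarrow> ideal M R)"

definition left_quasi_invariant :: "('a, 'm) ring_scheme \<Rightarrow> bool" where
  "left_quasi_invariant R \<longleftrightarrow> (\<forall>M. maximal_left_ideal M R \<longrightarrow> ideal M R)"

definition jacobson_radical :: "('a, 'm) ring_scheme \<Rightarrow> 'a set" where
  "jacobson_radical R = carrier R \<inter> \<Inter> {M. maximal_right_ideal M R}"

end

theory Submission
  imports Defs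
begin



context ring
begin

lemma addsub_iff:
  "additive_subgroup I R \<longleftrightarrow> I \<subseteq> carrier R \<and> \<zero> \<in> I \<and> (\<forall>x\<in>I. \<forall>y\<in>I. x \<oplus> y \<in> I) \<and> (\<forall>x\<in>I. \<ominus> x \<in> I)"
proof
  assume "additive_subgroup I R"
  then interpret S: additive_subgroup I R .
  show "I \<subseteq> carrier R \<and> \<zero> \<in> I \<and> (\<forall>x\<in>I. \<forall>y\<in>I. x \<oplus> y \<in> I) \<and> (\<forall>x\<in>I. \<ominus> x \<in> I)"
    using S.a_subset by auto
next
  assume H: "I \<subseteq> carrier R \<and> \<zero> \<in> I \<and> (\<forall>x\<in>I. \<forall>y\<in>I. x \<oplus> y \<in> I) \<and> (\<forall>x\<in>I. \<ominus> x \<in> I)"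
  show "additive_subgroup I R"
  proof (rule additive_subgroupI, rule subgroup.intro)
    show "I \<subseteq> carrier (add_monoid R)" using H by simp
    show "\<And>x y. x \<in> I \<Longrightarrow> y \<in> I \<Longrightarrow> x \<otimes>\<^bsub>add_monoid R\<^esub> y \<in> I" using H by simp
    show "\<one>\<^bsub>add_monoid R\<^esub> \<in> I" using H by simp
    show "\<And>x. x \<in> I \<Longrightarrow> inv\<^bsub>add_monoid R\<^esub> x \<in> I" using H by (simp add: a_inv_def[symmetric])
  qed
qed

lemma right_ideal_one:
  assumes "right_ideal I R" "\<one> \<in> I" shows "I = carrier R"
  using assms unfolding right_ideal_def addsub_iff by (metis l_one subsetI subset_antisym)

lemma left_ideal_one:
  assumes "left_ideal I R" "\<one> \<in> I" shows "I = carrier R"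
  using assms unfolding left_ideal_def addsub_iff by (metis r_one subsetI subset_antisym)

lemma max_right_gen:
  assumes m: "maximal_right_ideal m R" and u: "u \<in> carrier R" "u \<notin> m"
  shows "\<exists>w\<in>m. \<exists>r\<in>carrier R. \<one> = w \<oplus> u \<otimes> r"
proof -
  have mr: "right_ideal m R" and mne: "m \<noteq> carrier R"
    and mx: "\<And>I. right_ideal I R \<Longrightarrow> m \<subseteq> I \<Longrightarrow> I = m \<or> I = carrier R"
    using m unfolding maximal_right_ideal_def by auto
  have ms: "m \<subseteq> carrier R" "\<zero> \<in> m" "\<And>x y. x \<in> m \<Longrightarrow> y \<in> m \<Longrightarrow> x \<oplus> y \<in> m"
    "\<And>x. x \<in> m \<Longrightarrow> \<ominus> x \<in> m" "\<And>x r. x \<in> m \<Longrightarrow> r \<in> carrier R \<Longrightarrow> x \<otimes> r \<in> m"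
    using mr unfolding right_ideal_def addsub_iff by auto
  define I where "I = {w \<oplus> u \<otimes> r | w r. w \<in> m \<and> r \<in> carrier R}"
  have "right_ideal I R"
    unfolding right_ideal_def addsub_iff
  proof (intro conjI ballI)
    show "I \<subseteq> carrier R" unfolding I_def using ms(1) u by auto
    show "\<zero> \<in> I" unfolding I_def using ms(2) u
      by (intro CollectI exI[of _ \<zero>]) auto
  next
    fix x y assume "x \<in> I" "y \<in> I"
    then obtain w1 r1 w2 r2 where "x = w1 \<oplus> u \<otimes> r1" "y = w2 \<oplus> u \<otimes> r2" "w1 \<in> m" "w2 \<in> m"
      "r1 \<in> carrier R" "r2 \<in> carrier R" unfolding I_def by auto
    moreover have "w1 \<in> carrier R" "w2 \<in> carrier R" using ms(1) calculation by auto
    ultimately have "x \<oplus> y = (w1 \<oplus> w2) \<oplus> u \<otimes> (r1 \<oplus> r2)"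
      using u by (simp add: r_distr a_ac)
    then show "x \<oplus> y \<in> I" unfolding I_def using ms(3) \<open>w1 \<in> m\<close> \<open>w2 \<in> m\<close> \<open>r1 \<in> carrier R\<close> \<open>r2 \<in> carrier R\<close> by blast
  next
    fix x assume "x \<in> I"
    then obtain w1 r1 where "x = w1 \<oplus> u \<otimes> r1" "w1 \<in> m" "r1 \<in> carrier R" unfolding I_def by auto
    moreover have "w1 \<in> carrier R" using ms(1) calculation by auto
    ultimately have "\<ominus> x = (\<ominus> w1) \<oplus> u \<otimes> (\<ominus> r1)"
      using u by (simp add: r_minus minus_add)
    then show "\<ominus> x \<in> I" unfolding I_def using ms(4) \<open>w1 \<in> m\<close> \<open>r1 \<in> carrier R\<close> by blast
  next
    fix x s assume "x \<in> I" "s \<in> carrier R"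
    then obtain w1 r1 where "x = w1 \<oplus> u \<otimes> r1" "w1 \<in> m" "r1 \<in> carrier R" unfolding I_def by auto
    moreover have "w1 \<in> carrier R" using ms(1) calculation by auto
    ultimately have "x \<otimes> s = w1 \<otimes> s \<oplus> u \<otimes> (r1 \<otimes> s)"
      using u \<open>s \<in> carrier R\<close> by (simp add: l_distr m_assoc)
    then show "x \<otimes> s \<in> I" unfolding I_def using ms(5) \<open>w1 \<in> m\<close> \<open>r1 \<in> carrier R\<close> \<open>s \<in> carrier R\<close> by blast
  qed
  moreover have "m \<subseteq> I"
  proof
    fix w assume "w \<in> m"
    then have "w = w \<oplus> u \<otimes> \<zero>" using ms(1) u by auto
    then show "w \<in> I" unfolding I_def using \<open>w \<in> m\<close> by blast
  qed
  moreover have "u \<in> I"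
  proof -
    have "u = \<zero> \<oplus> u \<otimes> \<one>" using u by simp
    then show ?thesis unfolding I_def using ms(2) by blast
  qed
  ultimately have "I = carrier R" using mx u by blast
  then have "\<one> \<in> I" by simp
  then show ?thesis unfolding I_def by blast
qed

lemma max_left_gen:
  assumes m: "maximal_left_ideal m R" and u: "u \<in> carrier R" "u \<notin> m"
  shows "\<exists>w\<in>m. \<exists>r\<in>carrier R. \<one> = w \<oplus> r \<otimes> u"
proof -
  have mr: "left_ideal m R" and mne: "m \<noteq> carrier R"
    and mx: "\<And>I. left_ideal I R \<Longrightarrow> m \<subseteq> I \<Longrightarrow> I = m \<or> I = carrier R"
    using m unfolding maximal_left_ideal_def by auto
  have ms: "m \<subseteq> carrier R" "\<zero> \<in> m" "\<And>x y. x \<in> m \<Longrightarrow> y \<in> m \<Longrightarrow> x \<oplus> y \<in> m"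
    "\<And>x. x \<in> m \<Longrightarrow> \<ominus> x \<in> m" "\<And>x r. x \<in> m \<Longrightarrow> r \<in> carrier R \<Longrightarrow> r \<otimes> x \<in> m"
    using mr unfolding left_ideal_def addsub_iff by auto
  define I where "I = {w \<oplus> r \<otimes> u | w r. w \<in> m \<and> r \<in> carrier R}"
  have "left_ideal I R"
    unfolding left_ideal_def addsub_iff
  proof (intro conjI ballI)
    show "I \<subseteq> carrier R" unfolding I_def using ms(1) u by auto
    show "\<zero> \<in> I" unfolding I_def using ms(2) u
      by (intro CollectI exI[of _ \<zero>]) auto
  next
    fix x y assume "x \<in> I" "y \<in> I"
    then obtain w1 r1 w2 r2 where "x = w1 \<oplus> r1 \<otimes> u" "y = w2 \<oplus> r2 \<otimes> u" "w1 \<in> m" "w2 \<in> m"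
      "r1 \<in> carrier R" "r2 \<in> carrier R" unfolding I_def by auto
    moreover have "w1 \<in> carrier R" "w2 \<in> carrier R" using ms(1) calculation by auto
    ultimately have "x \<oplus> y = (w1 \<oplus> w2) \<oplus> (r1 \<oplus> r2) \<otimes> u"
      using u by (simp add: l_distr a_ac)
    then show "x \<oplus> y \<in> I" unfolding I_def using ms(3) \<open>w1 \<in> m\<close> \<open>w2 \<in> m\<close> \<open>r1 \<in> carrier R\<close> \<open>r2 \<in> carrier R\<close> by blast
  next
    fix x assume "x \<in> I"
    then obtain w1 r1 where "x = w1 \<oplus> r1 \<otimes> u" "w1 \<in> m" "r1 \<in> carrier R" unfolding I_def by auto
    moreover have "w1 \<in> carrier R" using ms(1) calculation by auto
    ultimately have "\<ominus> x = (\<ominus> w1) \<oplus> (\<ominus> r1) \<otimes> u"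
      using u by (simp add: l_minus minus_add)
    then show "\<ominus> x \<in> I" unfolding I_def using ms(4) \<open>w1 \<in> m\<close> \<open>r1 \<in> carrier R\<close> by blast
  next
    fix x s assume "x \<in> I" "s \<in> carrier R"
    then obtain w1 r1 where "x = w1 \<oplus> r1 \<otimes> u" "w1 \<in> m" "r1 \<in> carrier R" unfolding I_def by auto
    moreover have "w1 \<in> carrier R" using ms(1) calculation by auto
    ultimately have "s \<otimes> x = s \<otimes> w1 \<oplus> (s \<otimes> r1) \<otimes> u"
      using u \<open>s \<in> carrier R\<close> by (simp add: r_distr m_assoc)
    then show "s \<otimes> x \<in> I" unfolding I_def using ms(5) \<open>w1 \<in> m\<close> \<open>r1 \<in> carrier R\<close> \<open>s \<in> carrier R\<close> by blast
  qed
  moreover have "m \<subseteq> I"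
  proof
    fix w assume "w \<in> m"
    then have "w = w \<oplus> \<zero> \<otimes> u" using ms(1) u by auto
    then show "w \<in> I" unfolding I_def using \<open>w \<in> m\<close> by blast
  qed
  moreover have "u \<in> I"
  proof -
    have "u = \<zero> \<oplus> \<one> \<otimes> u" using u by simp
    then show ?thesis unfolding I_def using ms(2) by blast
  qed
  ultimately have "I = carrier R" using mx u by blast
  then have "\<one> \<in> I" by simp
  then show ?thesis unfolding I_def by blast
qed

end




context ring
begin

lemma expand1: assumes p: "p \<in> carrier R" and q: "q \<in> carrier R"
  shows "(\<one> \<ominus> p) \<otimes> (\<one> \<oplus> q) = \<one> \<ominus> p \<oplus> (q \<ominus> p \<otimes> q)"
  using p q by (simp add: l_distr r_distr a_minus_def l_minus a_ac)

lemma left_zorn: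
  assumes I: "left_ideal I R" "\<one> \<notin> I"
  shows "\<exists>M. maximal_left_ideal M R \<and> I \<subseteq> M"
proof -
  define S where "S = {J. left_ideal J R \<and> I \<subseteq> J \<and> \<one> \<notin> J}"
  have "S \<noteq> {}" using I unfolding S_def by auto
  moreover have "\<Union>C \<in> S" if C: "C \<noteq> {}" "subset.chain S C" for C
  proof -
    have CS: "C \<subseteq> S" and ch: "\<And>X1 Y1. X1 \<in> C \<Longrightarrow> Y1 \<in> C \<Longrightarrow> X1 \<subseteq> Y1 \<or> Y1 \<subseteq> X1"
      using C(2) unfolding subset.chain_def by auto
    have L: "\<And>J. J \<in> C \<Longrightarrow> J \<subseteq> carrier R \<and> \<zero> \<in> J \<and> (\<forall>x\<in>J. \<forall>y\<in>J. x \<oplus> y \<in> J) \<and> (\<forall>x\<in>J. \<ominus> x \<in> J)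
        \<and> (\<forall>a\<in>J. \<forall>r\<in>carrier R. r \<otimes> a \<in> J) \<and> I \<subseteq> J \<and> \<one> \<notin> J"
      using CS unfolding S_def left_ideal_def addsub_iff by blast
    have "left_ideal (\<Union>C) R"
      unfolding left_ideal_def addsub_iff
    proof (intro conjI ballI)
      show "\<Union>C \<subseteq> carrier R" using L by blast
      show "\<zero> \<in> \<Union>C" using L C(1) by blast
    next
      fix x y assume "x \<in> \<Union>C" "y \<in> \<Union>C"
      then obtain JX JY where J: "x \<in> JX" "y \<in> JY" "JX \<in> C" "JY \<in> C" by auto
      from ch[OF J(3) J(4)] show "x \<oplus> y \<in> \<Union>C"
      proof
        assume "JX \<subseteq> JY"
        then have "x \<oplus> y \<in> JY" using J L[OF J(4)] by blast
        then show ?thesis using J(4) by blast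
      next
        assume "JY \<subseteq> JX"
        then have "x \<oplus> y \<in> JX" using J L[OF J(3)] by blast
        then show ?thesis using J(3) by blast
      qed
    next
      fix x assume "x \<in> \<Union>C" then show "\<ominus> x \<in> \<Union>C" using L by blast
    next
      fix x r assume "x \<in> \<Union>C" "r \<in> carrier R" then show "r \<otimes> x \<in> \<Union>C" using L by blast
    qed
    then show ?thesis unfolding S_def using L C(1) by blast
  qed
  ultimately obtain M where M: "M \<in> S" "\<forall>JJ\<in>S. M \<subseteq> JJ \<longrightarrow> JJ = M"
    using subset_Zorn_nonempty[of S] by blast
  have "maximal_left_ideal M R"
    unfolding maximal_left_ideal_def
  proof (intro conjI allI impI)
    show "left_ideal M R" using M unfolding S_def by auto
    show "M \<noteq> carrier R" using M unfolding S_def by auto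
  next
    fix J assume J: "left_ideal J R \<and> M \<subseteq> J"
    show "J = M \<or> J = carrier R"
    proof (cases "\<one> \<in> J")
      case True then show ?thesis using left_ideal_one J by blast
    next
      case False then have "J \<in> S" using J M unfolding S_def by auto
      then show ?thesis using M J by blast
    qed
  qed
  then show ?thesis using M unfolding S_def by blast
qed

lemma left_inv_L1:
  assumes t: "t \<in> carrier R" and tl: "\<And>l. maximal_left_ideal l R \<Longrightarrow> t \<in> l"
    and s: "s \<in> carrier R"
  shows "\<exists>v\<in>carrier R. v \<otimes> (\<one> \<ominus> s \<otimes> t) = \<one>"
proof (rule ccontr)
  assume nv: "\<not> ?thesis"
  define u where "u = \<one> \<ominus> s \<otimes> t"
  have u: "u \<in> carrier R" unfolding u_def using s t by simp
  define I where "I = {r \<otimes> u | r. r \<in> carrier R}"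
  have "left_ideal I R"
    unfolding left_ideal_def addsub_iff
  proof (intro conjI ballI)
    show "I \<subseteq> carrier R" unfolding I_def using u by auto
    show "\<zero> \<in> I" unfolding I_def using u by (intro CollectI exI[of _ \<zero>]) auto
  next
    fix x y assume "x \<in> I" "y \<in> I"
    then obtain r1 r2 where "x = r1 \<otimes> u" "y = r2 \<otimes> u" "r1 \<in> carrier R" "r2 \<in> carrier R"
      unfolding I_def by auto
    then have "x \<oplus> y = (r1 \<oplus> r2) \<otimes> u" using u by (simp add: l_distr)
    then show "x \<oplus> y \<in> I" unfolding I_def using \<open>r1 \<in> carrier R\<close> \<open>r2 \<in> carrier R\<close> by blast
  next
    fix x assume "x \<in> I"
    then obtain r1 where "x = r1 \<otimes> u" "r1 \<in> carrier R" unfolding I_def by auto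
    then have "\<ominus> x = (\<ominus> r1) \<otimes> u" using u by (simp add: l_minus)
    then show "\<ominus> x \<in> I" unfolding I_def using \<open>r1 \<in> carrier R\<close> by blast
  next
    fix x r assume "x \<in> I" "r \<in> carrier R"
    then obtain r1 where "x = r1 \<otimes> u" "r1 \<in> carrier R" unfolding I_def by auto
    then have "r \<otimes> x = (r \<otimes> r1) \<otimes> u" using u \<open>r \<in> carrier R\<close> by (simp add: m_assoc)
    then show "r \<otimes> x \<in> I" unfolding I_def using \<open>r1 \<in> carrier R\<close> \<open>r \<in> carrier R\<close> by blast
  qed
  moreover have "\<one> \<notin> I" using nv unfolding I_def u_def by auto
  ultimately obtain M where M: "maximal_left_ideal M R" "I \<subseteq> M" using left_zorn by blast
  have Ml: "left_ideal M R" using M unfolding maximal_left_ideal_def by auto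
  have "t \<in> M" using tl M by auto
  then have "s \<otimes> t \<in> M" using Ml s unfolding left_ideal_def by auto
  moreover have "u \<in> M" using M(2) u unfolding I_def by (metis (mono_tags, lifting) CollectI l_one one_closed subsetD)
  ultimately have "u \<oplus> s \<otimes> t \<in> M" using Ml unfolding left_ideal_def addsub_iff by auto
  moreover have "u \<oplus> s \<otimes> t = \<one>" unfolding u_def using s t
    by (simp add: a_minus_def a_assoc l_neg)
  ultimately have "\<one> \<in> M" by simp
  then have "M = carrier R" using left_ideal_one Ml by blast
  then show False using M unfolding maximal_left_ideal_def by auto
qed

lemma two_sided_inv:
  assumes t: "t \<in> carrier R"
    and L1: "\<And>s. s \<in> carrier R \<Longrightarrow> \<exists>v\<in>carrier R. v \<otimes> (\<one> \<ominus> s \<otimes> t) = \<one>"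
    and s: "s \<in> carrier R"
  shows "\<exists>v\<in>carrier R. (\<one> \<ominus> s \<otimes> t) \<otimes> v = \<one>"
proof -
  obtain v where v: "v \<in> carrier R" "v \<otimes> (\<one> \<ominus> s \<otimes> t) = \<one>" using L1 s by blast
  have "v \<otimes> (\<one> \<ominus> s \<otimes> t) = v \<ominus> v \<otimes> s \<otimes> t" using v s t
    by (simp add: r_distr a_minus_def r_minus m_assoc)
  then have veq: "v = \<one> \<oplus> v \<otimes> s \<otimes> t" using v(1) s t v(2)
    by (metis a_minus_def add.inv_solve_right m_closed one_closed)
  have "v = \<one> \<ominus> (\<ominus> (v \<otimes> s)) \<otimes> t" using veq v s t
    by (simp add: a_minus_def l_minus)
  then obtain z where z: "z \<in> carrier R" "z \<otimes> v = \<one>" using L1[of "\<ominus> (v \<otimes> s)"] v s by auto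
  have uc: "\<one> \<ominus> s \<otimes> t \<in> carrier R" using s t by simp
  have "z = z \<otimes> (v \<otimes> (\<one> \<ominus> s \<otimes> t))" using z v by simp
  also have "\<dots> = (z \<otimes> v) \<otimes> (\<one> \<ominus> s \<otimes> t)" using m_assoc[symmetric, OF z(1) v(1) uc] .
  also have "\<dots> = \<one> \<ominus> s \<otimes> t" using z uc by simp
  finally have "z = \<one> \<ominus> s \<otimes> t" .
  then show ?thesis using z v by blast
qed

lemma jac_left:
  assumes t: "t \<in> carrier R" "t \<notin> jacobson_radical R"
  shows "\<exists>l. maximal_left_ideal l R \<and> t \<notin> l"
proof (rule ccontr)
  assume "\<not> ?thesis"
  then have tl: "\<And>l. maximal_left_ideal l R \<Longrightarrow> t \<in> l" by blast
  obtain m where m: "maximal_right_ideal m R" "t \<notin> m"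
    using t unfolding jacobson_radical_def by auto
  obtain w r where wr: "w \<in> m" "r \<in> carrier R" "\<one> = w \<oplus> t \<otimes> r"
    using max_right_gen[OF m(1) t(1) m(2)] by blast
  have mr: "right_ideal m R" using m unfolding maximal_right_ideal_def by auto
  have wc: "w \<in> carrier R" using mr wr unfolding right_ideal_def addsub_iff by auto
  have weq: "w = \<one> \<ominus> t \<otimes> r" using wr wc t
    by (metis a_minus_def add.inv_solve_right m_closed one_closed)
  obtain v where v: "v \<in> carrier R" "(\<one> \<ominus> r \<otimes> t) \<otimes> v = \<one>"
    using two_sided_inv[OF t(1) left_inv_L1[OF t(1) tl] wr(2)] by blast
  have key: "(\<one> \<ominus> t \<otimes> r) \<otimes> (\<one> \<oplus> t \<otimes> v \<otimes> r) = \<one>"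
  proof -
    have e1: "t \<otimes> ((\<one> \<ominus> r \<otimes> t) \<otimes> v) \<otimes> r = t \<otimes> r" by (subst v(2)) (use t wr(2) in simp)
    have e2: "t \<otimes> ((\<one> \<ominus> r \<otimes> t) \<otimes> v) \<otimes> r = t \<otimes> v \<otimes> r \<ominus> t \<otimes> r \<otimes> (t \<otimes> v \<otimes> r)"
      using v(1) t wr(2) by (simp add: l_distr r_distr a_minus_def l_minus r_minus m_assoc)
    have e3: "(\<one> \<ominus> t \<otimes> r) \<otimes> (\<one> \<oplus> t \<otimes> v \<otimes> r) =
        \<one> \<ominus> t \<otimes> r \<oplus> (t \<otimes> v \<otimes> r \<ominus> t \<otimes> r \<otimes> (t \<otimes> v \<otimes> r))"
      by (rule expand1) (use v(1) t wr(2) in auto)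
    have "(\<one> \<ominus> t \<otimes> r) \<otimes> (\<one> \<oplus> t \<otimes> v \<otimes> r) = \<one> \<ominus> t \<otimes> r \<oplus> t \<otimes> r"
      using e1 e2 e3 by simp
    also have "\<dots> = \<one>" using t wr(2) by (simp add: a_minus_def a_assoc l_neg)
    finally show ?thesis .
  qed
  have "\<one> \<in> m" using mr wr(1) key v t wr(2) unfolding weq right_ideal_def
    by (metis add.m_closed m_closed one_closed)
  then have "m = carrier R" using right_ideal_one mr by blast
  then show False using m unfolding maximal_right_ideal_def by auto
qed

end




abbreviation (input) UC where "UC \<equiv> up_ring.coeff"
abbreviation (input) UM where "UM \<equiv> up_ring.monom"

context UP_ring
begin

lemma coeff_mult_monom_r:
  assumes c: "c \<in> carrier R" and p: "p \<in> carrier P"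
  shows "UC P (p \<otimes>\<^bsub>P\<^esub> UM P c j) n = (if j \<le> n then UC P p (n - j) \<otimes> c else \<zero>)"
proof -
  have "UC P (p \<otimes>\<^bsub>P\<^esub> UM P c j) n = (\<Oplus>i\<in>{..n}. UC P p i \<otimes> (if j = n - i then c else \<zero>))"
    using c p by simp
  also have "\<dots> = (\<Oplus>i\<in>{..n}. (if n - j = i \<and> j \<le> n then UC P p i \<otimes> c else \<zero>))"
    by (rule R.finsum_cong') (use c p in auto)
  also have "\<dots> = (if j \<le> n then UC P p (n - j) \<otimes> c else \<zero>)"
  proof (cases "j \<le> n")
    case True
    then have "(\<Oplus>i\<in>{..n}. (if n - j = i \<and> j \<le> n then UC P p i \<otimes> c else \<zero>))
        = (\<Oplus>i\<in>{..n}. (if n - j = i then UC P p i \<otimes> c else \<zero>))" by simp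
    also have "\<dots> = UC P p (n - j) \<otimes> c"
      by (rule R.finsum_singleton) (use c p in auto)
    finally show ?thesis using True by simp
  next
    case False then show ?thesis by simp
  qed
  finally show ?thesis .
qed

lemma coeff_monom_mult_l:
  assumes c: "c \<in> carrier R" and p: "p \<in> carrier P"
  shows "UC P (UM P c j \<otimes>\<^bsub>P\<^esub> p) n = (if j \<le> n then c \<otimes> UC P p (n - j) else \<zero>)"
proof -
  have "UC P (UM P c j \<otimes>\<^bsub>P\<^esub> p) n = (\<Oplus>i\<in>{..n}. (if j = i then c else \<zero>) \<otimes> UC P p (n - i))"
    using c p by simp
  also have "\<dots> = (\<Oplus>i\<in>{..n}. (if j = i \<and> j \<le> n then c \<otimes> UC P p (n - i) else \<zero>))"
    by (rule R.finsum_cong') (use c p in auto)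
  also have "\<dots> = (if j \<le> n then c \<otimes> UC P p (n - j) else \<zero>)"
  proof (cases "j \<le> n")
    case True
    then have "(\<Oplus>i\<in>{..n}. (if j = i \<and> j \<le> n then c \<otimes> UC P p (n - i) else \<zero>))
        = (\<Oplus>i\<in>{..n}. (if j = i then c \<otimes> UC P p (n - i) else \<zero>))" by simp
    also have "\<dots> = c \<otimes> UC P p (n - j)"
      by (rule R.finsum_singleton) (use c p True in auto)
    finally show ?thesis using True by simp
  next
    case False then show ?thesis by simp
  qed
  finally show ?thesis .
qed

end




context UP_ring
begin

definition evRN :: "'a \<Rightarrow> nat \<Rightarrow> (nat \<Rightarrow> 'a) \<Rightarrow> 'a" where
  "evRN a N f = (\<Oplus>i\<in>{..N}. a [^] i \<otimes> UC P f i)"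

definition evR :: "'a \<Rightarrow> (nat \<Rightarrow> 'a) \<Rightarrow> 'a" where
  "evR a f = evRN a (deg R f) f"

lemma evRN_closed: "a \<in> carrier R \<Longrightarrow> f \<in> carrier P \<Longrightarrow> evRN a N f \<in> carrier R"
  unfolding evRN_def by (auto intro: R.finsum_closed)

lemma evR_closed: "a \<in> carrier R \<Longrightarrow> f \<in> carrier P \<Longrightarrow> evR a f \<in> carrier R"
  unfolding evR_def by (rule evRN_closed)

lemma evRN_ext:
  assumes a: "a \<in> carrier R" and f: "f \<in> carrier P" and z: "\<And>n. N < n \<Longrightarrow> UC P f n = \<zero>"
  shows "N \<le> K \<Longrightarrow> evRN a K f = evRN a N f"
proof (induction K)
  case 0 then show ?case by simp
next
  case (Suc K)
  show ?case
  proof (cases "N = Suc K")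
    case True then show ?thesis by simp
  next
    case False
    then have "N \<le> K" "N < Suc K" using Suc.prems by auto
    have "evRN a (Suc K) f = a [^] Suc K \<otimes> UC P f (Suc K) \<oplus> evRN a K f"
      unfolding evRN_def using a f by (simp add: Pi_def)
    also have "\<dots> = evRN a K f" using z[OF \<open>N < Suc K\<close>] a f evRN_closed by simp
    finally show ?thesis using Suc.IH[OF \<open>N \<le> K\<close>] by simp
  qed
qed

lemma evR_eq:
  assumes a: "a \<in> carrier R" and f: "f \<in> carrier P" and z: "\<And>n. N < n \<Longrightarrow> UC P f n = \<zero>"
  shows "evR a f = evRN a N f"
proof -
  have "evRN a (max N (deg R f)) f = evRN a N f" by (rule evRN_ext[OF a f z]) auto
  moreover have "evRN a (max N (deg R f)) f = evRN a (deg R f) f"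
    by (rule evRN_ext[OF a f]) (use deg_aboveD f in auto)
  ultimately show ?thesis unfolding evR_def by simp
qed

lemma evR_add:
  assumes a: "a \<in> carrier R" and f: "f \<in> carrier P" and g: "g \<in> carrier P"
  shows "evR a (f \<oplus>\<^bsub>P\<^esub> g) = evR a f \<oplus> evR a g"
proof -
  define N where "N = max (deg R f) (deg R g)"
  have zf: "\<And>n. N < n \<Longrightarrow> UC P f n = \<zero>" unfolding N_def using deg_aboveD f by auto
  have zg: "\<And>n. N < n \<Longrightarrow> UC P g n = \<zero>" unfolding N_def using deg_aboveD g by auto
  have zfg: "\<And>n. N < n \<Longrightarrow> UC P (f \<oplus>\<^bsub>P\<^esub> g) n = \<zero>" using zf zg f g by simp
  have "evRN a N (f \<oplus>\<^bsub>P\<^esub> g) = (\<Oplus>i\<in>{..N}. a [^] i \<otimes> UC P f i \<oplus> a [^] i \<otimes> UC P g i)"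
    unfolding evRN_def using a f g by (auto simp: R.r_distr intro!: R.finsum_cong')
  also have "\<dots> = evRN a N f \<oplus> evRN a N g"
    unfolding evRN_def by (rule R.finsum_addf) (use a f g in auto)
  finally have "evRN a N (f \<oplus>\<^bsub>P\<^esub> g) = evRN a N f \<oplus> evRN a N g" .
  then show ?thesis using evR_eq[OF a _ zfg] evR_eq[OF a f zf] evR_eq[OF a g zg] f g by simp
qed

lemma evR_zero: "a \<in> carrier R \<Longrightarrow> evR a \<zero>\<^bsub>P\<^esub> = \<zero>"
  using evR_eq[of a "\<zero>\<^bsub>P\<^esub>" 0] by (simp add: evRN_def)

lemma evR_neg:
  assumes a: "a \<in> carrier R" and f: "f \<in> carrier P"
  shows "evR a (\<ominus>\<^bsub>P\<^esub> f) = \<ominus> evR a f"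
proof -
  have "evR a (f \<oplus>\<^bsub>P\<^esub> \<ominus>\<^bsub>P\<^esub> f) = \<zero>" using evR_zero a f by (simp add: P.r_neg)
  then have "evR a f \<oplus> evR a (\<ominus>\<^bsub>P\<^esub> f) = \<zero>" using evR_add a f by simp
  then show ?thesis using a f evR_closed
    by (metis P.a_inv_closed R.add.inv_equality R.add.m_comm R.minus_equality)
qed

lemma evR_monom0: "a \<in> carrier R \<Longrightarrow> c \<in> carrier R \<Longrightarrow> evR a (UM P c 0) = c"
  using evR_eq[of a "UM P c 0" 0] by (simp add: evRN_def)

lemma evR_const_mult:
  assumes a: "a \<in> carrier R" and f: "f \<in> carrier P" and c: "c \<in> carrier R"
  shows "evR a (f \<otimes>\<^bsub>P\<^esub> UM P c 0) = evR a f \<otimes> c"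
proof -
  define N where "N = deg R f"
  have zf: "\<And>n. N < n \<Longrightarrow> UC P f n = \<zero>" unfolding N_def using deg_aboveD f by auto
  have co: "\<And>n. UC P (f \<otimes>\<^bsub>P\<^esub> UM P c 0) n = UC P f n \<otimes> c"
    using coeff_mult_monom_r[OF c f, of 0] by simp
  have z2: "\<And>n. N < n \<Longrightarrow> UC P (f \<otimes>\<^bsub>P\<^esub> UM P c 0) n = \<zero>" using co zf c by simp
  have "evRN a N (f \<otimes>\<^bsub>P\<^esub> UM P c 0) = evRN a N f \<otimes> c"
    unfolding evRN_def co
    by (subst R.finsum_ldistr) (use a f c in \<open>auto simp: R.m_assoc R.nat_pow_closed intro!: R.finsum_cong'\<close>)
  then show ?thesis using evR_eq[OF a _ z2] evR_eq[OF a f zf] f c by simp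
qed

lemma evR_x_mult:
  assumes a: "a \<in> carrier R" and f: "f \<in> carrier P"
  shows "evR a (f \<otimes>\<^bsub>P\<^esub> UM P \<one> 1) = a \<otimes> evR a f"
proof -
  define N where "N = deg R f"
  have zf: "\<And>n. N < n \<Longrightarrow> UC P f n = \<zero>" unfolding N_def using deg_aboveD f by auto
  have co: "\<And>n. UC P (f \<otimes>\<^bsub>P\<^esub> UM P \<one> 1) n = (if 1 \<le> n then UC P f (n - 1) else \<zero>)"
    using coeff_mult_monom_r[OF R.one_closed f, of 1] f by simp
  have z2: "\<And>n. Suc N < n \<Longrightarrow> UC P (f \<otimes>\<^bsub>P\<^esub> UM P \<one> 1) n = \<zero>" using co zf by simp
  have "evRN a (Suc N) (f \<otimes>\<^bsub>P\<^esub> UM P \<one> 1) =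
      (\<Oplus>i\<in>{..N}. a [^] Suc i \<otimes> UC P f i) \<oplus> a [^] (0::nat) \<otimes> \<zero>"
    unfolding evRN_def co
    by (subst R.finsum_Suc2) (use a f in \<open>auto simp: Pi_def\<close>)
  also have "\<dots> = (\<Oplus>i\<in>{..N}. a [^] Suc i \<otimes> UC P f i)"
    using a f by (simp add: R.finsum_closed Pi_def)
  also have "\<dots> = (\<Oplus>i\<in>{..N}. a \<otimes> (a [^] i \<otimes> UC P f i))"
  proof (rule R.finsum_cong')
    fix i assume "i \<in> {..N}"
    have pw: "a [^] Suc i = a \<otimes> a [^] i" using R.nat_pow_Suc2[OF a] .
    show "a [^] Suc i \<otimes> UC P f i = a \<otimes> (a [^] i \<otimes> UC P f i)"
      unfolding pw using a f by (simp add: R.m_assoc)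
  qed (use a f in auto)
  also have "\<dots> = a \<otimes> evRN a N f"
    unfolding evRN_def by (subst R.finsum_rdistr) (use a f in auto)
  finally show ?thesis using evR_eq[OF a _ z2] evR_eq[OF a f zf] f by simp
qed

end




context UP_ring
begin

lemma P_finsum_in:
  assumes fin: "finite J" and M: "M \<subseteq> carrier P" "\<zero>\<^bsub>P\<^esub> \<in> M" "\<And>x y. x \<in> M \<Longrightarrow> y \<in> M \<Longrightarrow> x \<oplus>\<^bsub>P\<^esub> y \<in> M"
  shows "h \<in> J \<rightarrow> M \<Longrightarrow> finsum P h J \<in> M"
  using fin
proof (induction J rule: finite_induct)
  case empty then show ?case using M by simp
next
  case (insert x F)
  then have "h \<in> F \<rightarrow> carrier P" "h x \<in> carrier P" using M(1) by auto
  then have "finsum P h (insert x F) = h x \<oplus>\<^bsub>P\<^esub> finsum P h F"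
    using insert by (simp add: P.finsum_insert)
  then show ?case using insert M by auto
qed

definition MR :: "'a \<Rightarrow> 'a set \<Rightarrow> (nat \<Rightarrow> 'a) set" where
  "MR a m = {f \<in> carrier P. evR a f \<in> m}"

lemma MR_right_ideal:
  assumes m: "right_ideal m R" and a: "a \<in> carrier R" and am: "\<And>w. w \<in> m \<Longrightarrow> a \<otimes> w \<in> m"
  shows "right_ideal (MR a m) P"
proof -
  have ms: "m \<subseteq> carrier R" "\<zero> \<in> m" "\<And>x y. x \<in> m \<Longrightarrow> y \<in> m \<Longrightarrow> x \<oplus> y \<in> m"
    "\<And>x. x \<in> m \<Longrightarrow> \<ominus> x \<in> m" "\<And>x r. x \<in> m \<Longrightarrow> r \<in> carrier R \<Longrightarrow> x \<otimes> r \<in> m"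
    using m unfolding right_ideal_def R.addsub_iff by auto
  have sub: "MR a m \<subseteq> carrier P" and z: "\<zero>\<^bsub>P\<^esub> \<in> MR a m"
    and add: "\<And>x y. x \<in> MR a m \<Longrightarrow> y \<in> MR a m \<Longrightarrow> x \<oplus>\<^bsub>P\<^esub> y \<in> MR a m"
    and neg: "\<And>x. x \<in> MR a m \<Longrightarrow> \<ominus>\<^bsub>P\<^esub> x \<in> MR a m"
    unfolding MR_def using a ms by (auto simp: evR_zero evR_add evR_neg)
  have c0: "f \<otimes>\<^bsub>P\<^esub> UM P c 0 \<in> MR a m" if "f \<in> MR a m" "c \<in> carrier R" for f c
    using that ms(5) unfolding MR_def by (auto simp: evR_const_mult a)
  have x1: "f \<otimes>\<^bsub>P\<^esub> UM P \<one> 1 \<in> MR a m" if "f \<in> MR a m" for f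
  proof -
    have "f \<in> carrier P" "evR a f \<in> m" using that unfolding MR_def by auto
    moreover have "evR a (f \<otimes>\<^bsub>P\<^esub> UM P \<one> 1) = a \<otimes> evR a f" using evR_x_mult[OF a] calculation(1) .
    ultimately show ?thesis using am unfolding MR_def by simp
  qed
  have xj: "\<And>f. f \<in> MR a m \<Longrightarrow> f \<otimes>\<^bsub>P\<^esub> UM P \<one> j \<in> MR a m" for j
  proof (induction j)
    case 0 then show ?case using sub by (auto simp: monom_one)
  next
    case (Suc j)
    have "UM P \<one> (Suc j) = UM P \<one> j \<otimes>\<^bsub>P\<^esub> UM P \<one> 1"
      using monom_mult[of \<one> \<one> j 1] by simp
    then have "f \<otimes>\<^bsub>P\<^esub> UM P \<one> (Suc j) = (f \<otimes>\<^bsub>P\<^esub> UM P \<one> j) \<otimes>\<^bsub>P\<^esub> UM P \<one> 1"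
    proof -
      have fc: "f \<in> carrier P" using Suc.prems sub by auto
      show ?thesis unfolding \<open>UM P \<one> (Suc j) = UM P \<one> j \<otimes>\<^bsub>P\<^esub> UM P \<one> 1\<close>
        using fc by (simp add: P.m_assoc)
    qed
    then show ?case using Suc x1 by simp
  qed
  have cj: "f \<otimes>\<^bsub>P\<^esub> UM P c j \<in> MR a m" if "f \<in> MR a m" "c \<in> carrier R" for f c j
  proof -
    have "UM P c j = UM P c 0 \<otimes>\<^bsub>P\<^esub> UM P \<one> j"
      using monom_mult[of c \<one> 0 j] that by simp
    then have "f \<otimes>\<^bsub>P\<^esub> UM P c j = (f \<otimes>\<^bsub>P\<^esub> UM P c 0) \<otimes>\<^bsub>P\<^esub> UM P \<one> j"
    proof -
      have fc: "f \<in> carrier P" using that sub by auto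
      show ?thesis unfolding \<open>UM P c j = UM P c 0 \<otimes>\<^bsub>P\<^esub> UM P \<one> j\<close>
        using fc that by (simp add: P.m_assoc)
    qed
    then show ?thesis using xj c0 that by simp
  qed
  have mult: "f \<otimes>\<^bsub>P\<^esub> g \<in> MR a m" if "f \<in> MR a m" "g \<in> carrier P" for f g
  proof -
    have "f \<otimes>\<^bsub>P\<^esub> g = f \<otimes>\<^bsub>P\<^esub> (\<Oplus>\<^bsub>P\<^esub> j \<in> {..deg R g}. UM P (UC P g j) j)"
      using up_repr[OF that(2)] by simp
    also have "\<dots> = (\<Oplus>\<^bsub>P\<^esub> j \<in> {..deg R g}. f \<otimes>\<^bsub>P\<^esub> UM P (UC P g j) j)"
      by (rule P.finsum_rdistr) (use that sub in auto)
    also have "\<dots> \<in> MR a m"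
      by (rule P_finsum_in[OF _ sub z add]) (use cj that in auto)
    finally show ?thesis .
  qed
  show ?thesis unfolding right_ideal_def P.addsub_iff
    using sub z add neg mult by blast
qed

lemma MR_maximal:
  assumes m: "maximal_right_ideal m R" and a: "a \<in> carrier R" and am: "\<And>w. w \<in> m \<Longrightarrow> a \<otimes> w \<in> m"
  shows "maximal_right_ideal (MR a m) P"
proof -
  have mr: "right_ideal m R" and mne: "m \<noteq> carrier R"
    using m unfolding maximal_right_ideal_def by auto
  have one_m: "\<one> \<notin> m" using R.right_ideal_one mr mne by blast
  have MRr: "right_ideal (MR a m) P" by (rule MR_right_ideal[OF mr a am])
  have ms: "m \<subseteq> carrier R" "\<And>x y. x \<in> m \<Longrightarrow> y \<in> m \<Longrightarrow> x \<oplus> y \<in> m"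
    using mr unfolding right_ideal_def R.addsub_iff by auto
  have ev1: "evR a \<one>\<^bsub>P\<^esub> = \<one>"
    using evR_monom0[OF a R.one_closed] by (simp add: monom_one)
  show ?thesis unfolding maximal_right_ideal_def
  proof (intro conjI allI impI)
    show "right_ideal (MR a m) P" by fact
    show "MR a m \<noteq> carrier P" using ev1 one_m P.one_closed unfolding MR_def by (metis (mono_tags, lifting) mem_Collect_eq)
  next
    fix I assume I: "right_ideal I P \<and> MR a m \<subseteq> I"
    have Ir: "\<And>x r. x \<in> I \<Longrightarrow> r \<in> carrier P \<Longrightarrow> x \<otimes>\<^bsub>P\<^esub> r \<in> I"
      and Is: "I \<subseteq> carrier P" "\<And>x y. x \<in> I \<Longrightarrow> y \<in> I \<Longrightarrow> x \<oplus>\<^bsub>P\<^esub> y \<in> I"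
      using I unfolding right_ideal_def P.addsub_iff by auto
    show "I = MR a m \<or> I = carrier P"
    proof (cases "I \<subseteq> MR a m")
      case True then show ?thesis using I by blast
    next
      case False
      then obtain g where g: "g \<in> I" "g \<notin> MR a m" by blast
      have gc: "g \<in> carrier P" using g Is by auto
      have u: "evR a g \<in> carrier R" "evR a g \<notin> m" using g gc evR_closed a unfolding MR_def by auto
      obtain w r where wr: "w \<in> m" "r \<in> carrier R" "\<one> = w \<oplus> evR a g \<otimes> r"
        using R.max_right_gen[OF m u] by blast
      define h where "h = \<one>\<^bsub>P\<^esub> \<ominus>\<^bsub>P\<^esub> g \<otimes>\<^bsub>P\<^esub> UM P r 0"
      have gr: "g \<otimes>\<^bsub>P\<^esub> UM P r 0 \<in> carrier P" using gc wr by simp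
      have hc: "h \<in> carrier P" unfolding h_def using gr by simp
      have "evR a h = \<one> \<ominus> evR a g \<otimes> r"
        unfolding h_def P.minus_eq using gc gr wr a
        by (simp add: evR_add evR_neg evR_const_mult ev1 R.minus_eq)
      also have "\<dots> = w" using wr ms u
        by (metis R.add.inv_solve_right R.m_closed R.minus_eq R.one_closed subsetD)
      finally have "h \<in> MR a m" using hc wr unfolding MR_def by simp
      then have "h \<in> I" using I by blast
      moreover have "g \<otimes>\<^bsub>P\<^esub> UM P r 0 \<in> I" using Ir g wr by simp
      ultimately have "h \<oplus>\<^bsub>P\<^esub> g \<otimes>\<^bsub>P\<^esub> UM P r 0 \<in> I" using Is by blast
      moreover have "h \<oplus>\<^bsub>P\<^esub> g \<otimes>\<^bsub>P\<^esub> UM P r 0 = \<one>\<^bsub>P\<^esub>"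
        unfolding h_def using gr by (simp add: P.minus_eq P.a_assoc P.l_neg)
      ultimately have "\<one>\<^bsub>P\<^esub> \<in> I" by simp
      then show ?thesis using P.right_ideal_one I by blast
    qed
  qed
qed

end




context UP_ring
begin

definition evLN :: "'a \<Rightarrow> nat \<Rightarrow> (nat \<Rightarrow> 'a) \<Rightarrow> 'a" where
  "evLN a N f = (\<Oplus>i\<in>{..N}. UC P f i \<otimes> a [^] i)"

definition evL :: "'a \<Rightarrow> (nat \<Rightarrow> 'a) \<Rightarrow> 'a" where
  "evL a f = evLN a (deg R f) f"

lemma evLN_closed: "a \<in> carrier R \<Longrightarrow> f \<in> carrier P \<Longrightarrow> evLN a N f \<in> carrier R"
  unfolding evLN_def by (auto intro: R.finsum_closed)

lemma evL_closed: "a \<in> carrier R \<Longrightarrow> f \<in> carrier P \<Longrightarrow> evL a f \<in> carrier R"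
  unfolding evL_def by (rule evLN_closed)

lemma evLN_ext:
  assumes a: "a \<in> carrier R" and f: "f \<in> carrier P" and z: "\<And>n. N < n \<Longrightarrow> UC P f n = \<zero>"
  shows "N \<le> K \<Longrightarrow> evLN a K f = evLN a N f"
proof (induction K)
  case 0 then show ?case by simp
next
  case (Suc K)
  show ?case
  proof (cases "N = Suc K")
    case True then show ?thesis by simp
  next
    case False
    then have "N \<le> K" "N < Suc K" using Suc.prems by auto
    have "evLN a (Suc K) f = UC P f (Suc K) \<otimes> a [^] Suc K \<oplus> evLN a K f"
      unfolding evLN_def using a f by (simp add: Pi_def)
    also have "\<dots> = evLN a K f" using z[OF \<open>N < Suc K\<close>] a f evLN_closed by simp
    finally show ?thesis using Suc.IH[OF \<open>N \<le> K\<close>] by simp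
  qed
qed

lemma evL_eq:
  assumes a: "a \<in> carrier R" and f: "f \<in> carrier P" and z: "\<And>n. N < n \<Longrightarrow> UC P f n = \<zero>"
  shows "evL a f = evLN a N f"
proof -
  have "evLN a (max N (deg R f)) f = evLN a N f" by (rule evLN_ext[OF a f z]) auto
  moreover have "evLN a (max N (deg R f)) f = evLN a (deg R f) f"
    by (rule evLN_ext[OF a f]) (use deg_aboveD f in auto)
  ultimately show ?thesis unfolding evL_def by simp
qed

lemma evL_add:
  assumes a: "a \<in> carrier R" and f: "f \<in> carrier P" and g: "g \<in> carrier P"
  shows "evL a (f \<oplus>\<^bsub>P\<^esub> g) = evL a f \<oplus> evL a g"
proof -
  define N where "N = max (deg R f) (deg R g)"
  have zf: "\<And>n. N < n \<Longrightarrow> UC P f n = \<zero>" unfolding N_def using deg_aboveD f by auto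
  have zg: "\<And>n. N < n \<Longrightarrow> UC P g n = \<zero>" unfolding N_def using deg_aboveD g by auto
  have zfg: "\<And>n. N < n \<Longrightarrow> UC P (f \<oplus>\<^bsub>P\<^esub> g) n = \<zero>" using zf zg f g by simp
  have "evLN a N (f \<oplus>\<^bsub>P\<^esub> g) = (\<Oplus>i\<in>{..N}. UC P f i \<otimes> a [^] i \<oplus> UC P g i \<otimes> a [^] i)"
    unfolding evLN_def using a f g by (auto simp: R.l_distr intro!: R.finsum_cong')
  also have "\<dots> = evLN a N f \<oplus> evLN a N g"
    unfolding evLN_def by (rule R.finsum_addf) (use a f g in auto)
  finally have "evLN a N (f \<oplus>\<^bsub>P\<^esub> g) = evLN a N f \<oplus> evLN a N g" .
  then show ?thesis using evL_eq[OF a _ zfg] evL_eq[OF a f zf] evL_eq[OF a g zg] f g by simp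
qed

lemma evL_zero: "a \<in> carrier R \<Longrightarrow> evL a \<zero>\<^bsub>P\<^esub> = \<zero>"
  using evL_eq[of a "\<zero>\<^bsub>P\<^esub>" 0] by (simp add: evLN_def)

lemma evL_neg:
  assumes a: "a \<in> carrier R" and f: "f \<in> carrier P"
  shows "evL a (\<ominus>\<^bsub>P\<^esub> f) = \<ominus> evL a f"
proof -
  have "evL a (f \<oplus>\<^bsub>P\<^esub> \<ominus>\<^bsub>P\<^esub> f) = \<zero>" using evL_zero a f by (simp add: P.r_neg)
  then have "evL a f \<oplus> evL a (\<ominus>\<^bsub>P\<^esub> f) = \<zero>" using evL_add a f by simp
  then show ?thesis using a f evL_closed
    by (metis P.a_inv_closed R.add.inv_equality R.add.m_comm R.minus_equality)
qed

lemma evL_monom0: "a \<in> carrier R \<Longrightarrow> c \<in> carrier R \<Longrightarrow> evL a (UM P c 0) = c"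
  using evL_eq[of a "UM P c 0" 0] by (simp add: evLN_def)

lemma evL_const_mult:
  assumes a: "a \<in> carrier R" and f: "f \<in> carrier P" and c: "c \<in> carrier R"
  shows "evL a (UM P c 0 \<otimes>\<^bsub>P\<^esub> f) = c \<otimes> evL a f"
proof -
  define N where "N = deg R f"
  have zf: "\<And>n. N < n \<Longrightarrow> UC P f n = \<zero>" unfolding N_def using deg_aboveD f by auto
  have co: "\<And>n. UC P (UM P c 0 \<otimes>\<^bsub>P\<^esub> f) n = c \<otimes> UC P f n"
    using coeff_monom_mult_l[OF c f, of 0] by simp
  have z2: "\<And>n. N < n \<Longrightarrow> UC P (UM P c 0 \<otimes>\<^bsub>P\<^esub> f) n = \<zero>" using co zf c by simp
  have "evLN a N (UM P c 0 \<otimes>\<^bsub>P\<^esub> f) = c \<otimes> evLN a N f"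
    unfolding evLN_def co
    by (subst R.finsum_rdistr) (use a f c in \<open>auto simp: R.m_assoc R.nat_pow_closed intro!: R.finsum_cong'\<close>)
  then show ?thesis using evL_eq[OF a _ z2] evL_eq[OF a f zf] f c by simp
qed

lemma evL_x_mult:
  assumes a: "a \<in> carrier R" and f: "f \<in> carrier P"
  shows "evL a (UM P \<one> 1 \<otimes>\<^bsub>P\<^esub> f) = evL a f \<otimes> a"
proof -
  define N where "N = deg R f"
  have zf: "\<And>n. N < n \<Longrightarrow> UC P f n = \<zero>" unfolding N_def using deg_aboveD f by auto
  have co: "\<And>n. UC P (UM P \<one> 1 \<otimes>\<^bsub>P\<^esub> f) n = (if 1 \<le> n then UC P f (n - 1) else \<zero>)"
    using coeff_monom_mult_l[OF R.one_closed f, of 1] f by simp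
  have z2: "\<And>n. Suc N < n \<Longrightarrow> UC P (UM P \<one> 1 \<otimes>\<^bsub>P\<^esub> f) n = \<zero>" using co zf by simp
  have "evLN a (Suc N) (UM P \<one> 1 \<otimes>\<^bsub>P\<^esub> f) =
      (\<Oplus>i\<in>{..N}. UC P f i \<otimes> a [^] Suc i) \<oplus> \<zero> \<otimes> a [^] (0::nat)"
    unfolding evLN_def co
    by (subst R.finsum_Suc2) (use a f in \<open>auto simp: Pi_def\<close>)
  also have "\<dots> = (\<Oplus>i\<in>{..N}. UC P f i \<otimes> a [^] Suc i)"
    using a f by (simp add: R.finsum_closed Pi_def)
  also have "\<dots> = (\<Oplus>i\<in>{..N}. (UC P f i \<otimes> a [^] i) \<otimes> a)"
  proof (rule R.finsum_cong')
    fix i assume "i \<in> {..N}"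
    show "UC P f i \<otimes> a [^] Suc i = (UC P f i \<otimes> a [^] i) \<otimes> a"
      using a f by (simp add: R.m_assoc)
  qed (use a f in auto)
  also have "\<dots> = evLN a N f \<otimes> a"
    unfolding evLN_def by (subst R.finsum_ldistr) (use a f in auto)
  finally show ?thesis using evL_eq[OF a _ z2] evL_eq[OF a f zf] f by simp
qed

end




context UP_ring
begin

definition LftI :: "'a \<Rightarrow> 'a set \<Rightarrow> (nat \<Rightarrow> 'a) set" where
  "LftI a m = {f \<in> carrier P. evL a f \<in> m}"

lemma Lft_left_ideal:
  assumes m: "left_ideal m R" and a: "a \<in> carrier R" and am: "\<And>w. w \<in> m \<Longrightarrow> w \<otimes> a \<in> m"
  shows "left_ideal (LftI a m) P"
proof -
  have ms: "m \<subseteq> carrier R" "\<zero> \<in> m" "\<And>x y. x \<in> m \<Longrightarrow> y \<in> m \<Longrightarrow> x \<oplus> y \<in> m"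
    "\<And>x. x \<in> m \<Longrightarrow> \<ominus> x \<in> m" "\<And>x r. x \<in> m \<Longrightarrow> r \<in> carrier R \<Longrightarrow> r \<otimes> x \<in> m"
    using m unfolding left_ideal_def R.addsub_iff by auto
  have sub: "LftI a m \<subseteq> carrier P" and z: "\<zero>\<^bsub>P\<^esub> \<in> LftI a m"
    and add: "\<And>x y. x \<in> LftI a m \<Longrightarrow> y \<in> LftI a m \<Longrightarrow> x \<oplus>\<^bsub>P\<^esub> y \<in> LftI a m"
    and neg: "\<And>x. x \<in> LftI a m \<Longrightarrow> \<ominus>\<^bsub>P\<^esub> x \<in> LftI a m"
    unfolding LftI_def using a ms by (auto simp: evL_zero evL_add evL_neg)
  have c0: "UM P c 0 \<otimes>\<^bsub>P\<^esub> f \<in> LftI a m" if "f \<in> LftI a m" "c \<in> carrier R" for f c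
    using that ms(5) unfolding LftI_def by (auto simp: evL_const_mult a)
  have x1: "UM P \<one> 1 \<otimes>\<^bsub>P\<^esub> f \<in> LftI a m" if "f \<in> LftI a m" for f
  proof -
    have "f \<in> carrier P" "evL a f \<in> m" using that unfolding LftI_def by auto
    moreover have "evL a (UM P \<one> 1 \<otimes>\<^bsub>P\<^esub> f) = evL a f \<otimes> a" using evL_x_mult[OF a] calculation(1) .
    ultimately show ?thesis using am unfolding LftI_def by simp
  qed
  have xj: "\<And>f. f \<in> LftI a m \<Longrightarrow> UM P \<one> j \<otimes>\<^bsub>P\<^esub> f \<in> LftI a m" for j
  proof (induction j)
    case 0 then show ?case using sub by (auto simp: monom_one)
  next
    case (Suc j)
    have "UM P \<one> (Suc j) = UM P \<one> 1 \<otimes>\<^bsub>P\<^esub> UM P \<one> j"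
      using monom_mult[of \<one> \<one> 1 j] by simp
    then have "UM P \<one> (Suc j) \<otimes>\<^bsub>P\<^esub> f = UM P \<one> 1 \<otimes>\<^bsub>P\<^esub> (UM P \<one> j \<otimes>\<^bsub>P\<^esub> f)"
    proof -
      have fc: "f \<in> carrier P" using Suc.prems sub by auto
      show ?thesis unfolding \<open>UM P \<one> (Suc j) = UM P \<one> 1 \<otimes>\<^bsub>P\<^esub> UM P \<one> j\<close>
        using fc by (simp add: P.m_assoc)
    qed
    then show ?case using Suc x1 by simp
  qed
  have cj: "UM P c j \<otimes>\<^bsub>P\<^esub> f \<in> LftI a m" if "f \<in> LftI a m" "c \<in> carrier R" for f c j
  proof -
    have "UM P c j = UM P \<one> j \<otimes>\<^bsub>P\<^esub> UM P c 0"
      using monom_mult[of \<one> c j 0] that by simp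
    then have "UM P c j \<otimes>\<^bsub>P\<^esub> f = UM P \<one> j \<otimes>\<^bsub>P\<^esub> (UM P c 0 \<otimes>\<^bsub>P\<^esub> f)"
    proof -
      have fc: "f \<in> carrier P" using that sub by auto
      show ?thesis unfolding \<open>UM P c j = UM P \<one> j \<otimes>\<^bsub>P\<^esub> UM P c 0\<close>
        using fc that by (simp add: P.m_assoc)
    qed
    then show ?thesis using xj c0 that by simp
  qed
  have mult: "g \<otimes>\<^bsub>P\<^esub> f \<in> LftI a m" if "f \<in> LftI a m" "g \<in> carrier P" for f g
  proof -
    have "g \<otimes>\<^bsub>P\<^esub> f = (\<Oplus>\<^bsub>P\<^esub> j \<in> {..deg R g}. UM P (UC P g j) j) \<otimes>\<^bsub>P\<^esub> f"
      using up_repr[OF that(2)] by simp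
    also have "\<dots> = (\<Oplus>\<^bsub>P\<^esub> j \<in> {..deg R g}. UM P (UC P g j) j \<otimes>\<^bsub>P\<^esub> f)"
      by (rule P.finsum_ldistr) (use that sub in auto)
    also have "\<dots> \<in> LftI a m"
      by (rule P_finsum_in[OF _ sub z add]) (use cj that in auto)
    finally show ?thesis .
  qed
  show ?thesis unfolding left_ideal_def P.addsub_iff
    using sub z add neg mult by blast
qed

lemma Lft_maximal:
  assumes m: "maximal_left_ideal m R" and a: "a \<in> carrier R" and am: "\<And>w. w \<in> m \<Longrightarrow> w \<otimes> a \<in> m"
  shows "maximal_left_ideal (LftI a m) P"
proof -
  have mr: "left_ideal m R" and mne: "m \<noteq> carrier R"
    using m unfolding maximal_left_ideal_def by auto
  have one_m: "\<one> \<notin> m" using R.left_ideal_one mr mne by blast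
  have MRr: "left_ideal (LftI a m) P" by (rule Lft_left_ideal[OF mr a am])
  have ms: "m \<subseteq> carrier R" "\<And>x y. x \<in> m \<Longrightarrow> y \<in> m \<Longrightarrow> x \<oplus> y \<in> m"
    using mr unfolding left_ideal_def R.addsub_iff by auto
  have ev1: "evL a \<one>\<^bsub>P\<^esub> = \<one>"
    using evL_monom0[OF a R.one_closed] by (simp add: monom_one)
  show ?thesis unfolding maximal_left_ideal_def
  proof (intro conjI allI impI)
    show "left_ideal (LftI a m) P" by fact
    show "LftI a m \<noteq> carrier P" using ev1 one_m P.one_closed unfolding LftI_def by (metis (mono_tags, lifting) mem_Collect_eq)
  next
    fix I assume I: "left_ideal I P \<and> LftI a m \<subseteq> I"
    have Ir: "\<And>x r. x \<in> I \<Longrightarrow> r \<in> carrier P \<Longrightarrow> r \<otimes>\<^bsub>P\<^esub> x \<in> I"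
      and Is: "I \<subseteq> carrier P" "\<And>x y. x \<in> I \<Longrightarrow> y \<in> I \<Longrightarrow> x \<oplus>\<^bsub>P\<^esub> y \<in> I"
      using I unfolding left_ideal_def P.addsub_iff by auto
    show "I = LftI a m \<or> I = carrier P"
    proof (cases "I \<subseteq> LftI a m")
      case True then show ?thesis using I by blast
    next
      case False
      then obtain g where g: "g \<in> I" "g \<notin> LftI a m" by blast
      have gc: "g \<in> carrier P" using g Is by auto
      have u: "evL a g \<in> carrier R" "evL a g \<notin> m" using g gc evL_closed a unfolding LftI_def by auto
      obtain w r where wr: "w \<in> m" "r \<in> carrier R" "\<one> = w \<oplus> r \<otimes> evL a g"
        using R.max_left_gen[OF m u] by blast
      define h where "h = \<one>\<^bsub>P\<^esub> \<ominus>\<^bsub>P\<^esub> UM P r 0 \<otimes>\<^bsub>P\<^esub> g"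
      have gr: "UM P r 0 \<otimes>\<^bsub>P\<^esub> g \<in> carrier P" using gc wr by simp
      have hc: "h \<in> carrier P" unfolding h_def using gr by simp
      have "evL a h = \<one> \<ominus> r \<otimes> evL a g"
        unfolding h_def P.minus_eq using gc gr wr a
        by (simp add: evL_add evL_neg evL_const_mult ev1 R.minus_eq)
      also have "\<dots> = w" using wr ms u
        by (metis R.add.inv_solve_right R.m_closed R.minus_eq R.one_closed subsetD)
      finally have "h \<in> LftI a m" using hc wr unfolding LftI_def by simp
      then have "h \<in> I" using I by blast
      moreover have "UM P r 0 \<otimes>\<^bsub>P\<^esub> g \<in> I" using Ir g wr by simp
      ultimately have "h \<oplus>\<^bsub>P\<^esub> UM P r 0 \<otimes>\<^bsub>P\<^esub> g \<in> I" using Is by blast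
      moreover have "h \<oplus>\<^bsub>P\<^esub> UM P r 0 \<otimes>\<^bsub>P\<^esub> g = \<one>\<^bsub>P\<^esub>"
        unfolding h_def using gr by (simp add: P.minus_eq P.a_assoc P.l_neg)
      ultimately have "\<one>\<^bsub>P\<^esub> \<in> I" by simp
      then show ?thesis using P.left_ideal_one I by blast
    qed
  qed
qed

end




context UP_ring
begin

lemma not_rqi:
  assumes m: "maximal_right_ideal m R" and a: "a \<in> carrier R" and b: "b \<in> carrier R"
    and t: "a \<otimes> b \<ominus> b \<otimes> a \<notin> m"
  shows "\<not> right_quasi_invariant P"
proof
  assume rqi: "right_quasi_invariant P"
  have mr: "right_ideal m R" using m unfolding maximal_right_ideal_def by auto
  have ms: "m \<subseteq> carrier R" "\<zero> \<in> m" using mr unfolding right_ideal_def R.addsub_iff by auto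
  show False
  proof (cases "\<forall>w\<in>m. \<forall>c\<in>carrier R. c \<otimes> w \<in> m")
    case True
    then have am: "\<And>w. w \<in> m \<Longrightarrow> a \<otimes> w \<in> m" using a by blast
    have Mx: "maximal_right_ideal (MR a m) P" by (rule MR_maximal[OF m a am])
    then have idl: "ideal (MR a m) P" using rqi unfolding right_quasi_invariant_def by blast
    define x where "x = UM P \<one> 1"
    have xc: "x \<in> carrier P" unfolding x_def by simp
    have ex: "evR a x = a"
      using evR_x_mult[OF a P.one_closed] evR_monom0[OF a R.one_closed] a
      unfolding x_def by (simp add: monom_one)
    define p where "p = x \<ominus>\<^bsub>P\<^esub> UM P a 0"
    have pc: "p \<in> carrier P" unfolding p_def using xc a by simp
    have ep: "evR a p = \<zero>" unfolding p_def P.minus_eq using xc a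
      by (simp add: evR_add evR_neg ex evR_monom0 R.r_neg)
    have pM: "p \<in> MR a m" unfolding MR_def using pc ep ms by simp
    have "UM P b 0 \<otimes>\<^bsub>P\<^esub> p \<in> MR a m" using ideal.I_l_closed[OF idl pM] b by simp
    moreover have "UM P b 0 \<otimes>\<^bsub>P\<^esub> p = UM P b 0 \<otimes>\<^bsub>P\<^esub> x \<oplus>\<^bsub>P\<^esub> \<ominus>\<^bsub>P\<^esub> UM P (b \<otimes> a) 0"
      unfolding p_def P.minus_eq using xc a b
      by (simp add: P.r_distr P.r_minus monom_mult[of b a 0 0, simplified])
    moreover have "evR a (UM P b 0 \<otimes>\<^bsub>P\<^esub> x) = a \<otimes> b"
      using evR_x_mult[OF a, of "UM P b 0"] evR_monom0[OF a b] b unfolding x_def by simp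
    ultimately have "a \<otimes> b \<ominus> b \<otimes> a \<in> m" using xc a b
      unfolding MR_def by (simp add: evR_add evR_neg evR_monom0 R.minus_eq)
    then show False using t by simp
  next
    case False
    then obtain s c where sc: "s \<in> m" "c \<in> carrier R" "c \<otimes> s \<notin> m" by blast
    have sC: "s \<in> carrier R" using sc ms by auto
    have am: "\<And>w. w \<in> m \<Longrightarrow> \<zero> \<otimes> w \<in> m" using ms by auto
    have Mx: "maximal_right_ideal (MR \<zero> m) P" by (rule MR_maximal[OF m R.zero_closed am])
    then have idl: "ideal (MR \<zero> m) P" using rqi unfolding right_quasi_invariant_def by blast
    have pM: "UM P s 0 \<in> MR \<zero> m" unfolding MR_def using sC sc evR_monom0[OF R.zero_closed sC] by simp
    have "UM P c 0 \<otimes>\<^bsub>P\<^esub> UM P s 0 \<in> MR \<zero> m" using ideal.I_l_closed[OF idl pM] sc by simp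
    moreover have "UM P c 0 \<otimes>\<^bsub>P\<^esub> UM P s 0 = UM P (c \<otimes> s) 0"
      using monom_mult[of c s 0 0] sc sC by simp
    ultimately show False using sc sC evR_monom0[OF R.zero_closed, of "c \<otimes> s"] unfolding MR_def by simp
  qed
qed

lemma not_lqi:
  assumes m: "maximal_left_ideal m R" and a: "a \<in> carrier R" and b: "b \<in> carrier R"
    and t: "a \<otimes> b \<ominus> b \<otimes> a \<notin> m"
  shows "\<not> left_quasi_invariant P"
proof
  assume rqi: "left_quasi_invariant P"
  have mr: "left_ideal m R" using m unfolding maximal_left_ideal_def by auto
  have ms: "m \<subseteq> carrier R" "\<zero> \<in> m" "\<And>x. x \<in> m \<Longrightarrow> \<ominus> x \<in> m"
    using mr unfolding left_ideal_def R.addsub_iff by auto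
  show False
  proof (cases "\<forall>w\<in>m. \<forall>c\<in>carrier R. w \<otimes> c \<in> m")
    case True
    then have am: "\<And>w. w \<in> m \<Longrightarrow> w \<otimes> a \<in> m" using a by blast
    have Mx: "maximal_left_ideal (LftI a m) P" by (rule Lft_maximal[OF m a am])
    then have idl: "ideal (LftI a m) P" using rqi unfolding left_quasi_invariant_def by blast
    define x where "x = UM P \<one> 1"
    have xc: "x \<in> carrier P" unfolding x_def by simp
    have ex: "evL a x = a"
      using evL_x_mult[OF a P.one_closed] evL_monom0[OF a R.one_closed] a
      unfolding x_def by (simp add: monom_one)
    define p where "p = x \<ominus>\<^bsub>P\<^esub> UM P a 0"
    have pc: "p \<in> carrier P" unfolding p_def using xc a by simp
    have ep: "evL a p = \<zero>" unfolding p_def P.minus_eq using xc a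
      by (simp add: evL_add evL_neg ex evL_monom0 R.r_neg)
    have pM: "p \<in> LftI a m" unfolding LftI_def using pc ep ms by simp
    have "p \<otimes>\<^bsub>P\<^esub> UM P b 0 \<in> LftI a m" using ideal.I_r_closed[OF idl pM] b by simp
    moreover have "p \<otimes>\<^bsub>P\<^esub> UM P b 0 = x \<otimes>\<^bsub>P\<^esub> UM P b 0 \<oplus>\<^bsub>P\<^esub> \<ominus>\<^bsub>P\<^esub> UM P (a \<otimes> b) 0"
      unfolding p_def P.minus_eq using xc a b
      by (simp add: P.l_distr P.l_minus monom_mult[of a b 0 0, simplified])
    moreover have "evL a (x \<otimes>\<^bsub>P\<^esub> UM P b 0) = b \<otimes> a"
      using evL_x_mult[OF a, of "UM P b 0"] evL_monom0[OF a b] b unfolding x_def by simp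
    ultimately have "b \<otimes> a \<ominus> a \<otimes> b \<in> m" using xc a b
      unfolding LftI_def by (simp add: evL_add evL_neg evL_monom0 R.minus_eq)
    then have "\<ominus> (b \<otimes> a \<ominus> a \<otimes> b) \<in> m" using ms by blast
    moreover have "\<ominus> (b \<otimes> a \<ominus> a \<otimes> b) = a \<otimes> b \<ominus> b \<otimes> a" using a b
      by (simp add: R.minus_eq R.minus_add R.a_comm)
    ultimately show False using t by simp
  next
    case False
    then obtain s c where sc: "s \<in> m" "c \<in> carrier R" "s \<otimes> c \<notin> m" by blast
    have sC: "s \<in> carrier R" using sc ms by auto
    have am: "\<And>w. w \<in> m \<Longrightarrow> w \<otimes> \<zero> \<in> m" using ms by auto
    have Mx: "maximal_left_ideal (LftI \<zero> m) P" by (rule Lft_maximal[OF m R.zero_closed am])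
    then have idl: "ideal (LftI \<zero> m) P" using rqi unfolding left_quasi_invariant_def by blast
    have pM: "UM P s 0 \<in> LftI \<zero> m" unfolding LftI_def using sC sc evL_monom0[OF R.zero_closed sC] by simp
    have "UM P s 0 \<otimes>\<^bsub>P\<^esub> UM P c 0 \<in> LftI \<zero> m" using ideal.I_r_closed[OF idl pM] sc by simp
    moreover have "UM P s 0 \<otimes>\<^bsub>P\<^esub> UM P c 0 = UM P (s \<otimes> c) 0"
      using monom_mult[of s c 0 0] sc sC by simp
    ultimately show False using sc sC evL_monom0[OF R.zero_closed, of "s \<otimes> c"] unfolding LftI_def by simp
  qed
qed

end




lemma (in ring) center_mult:
  "x \<in> ring_center R \<Longrightarrow> y \<in> ring_center R \<Longrightarrow> x \<otimes> y \<in> ring_center R"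
proof -
  assume x: "x \<in> ring_center R" and y: "y \<in> ring_center R"
  have xc: "x \<in> carrier R" and yc: "y \<in> carrier R"
    and xz: "\<And>a. a \<in> carrier R \<Longrightarrow> x \<otimes> a = a \<otimes> x"
    and yz: "\<And>a. a \<in> carrier R \<Longrightarrow> y \<otimes> a = a \<otimes> y"
    using x y unfolding ring_center_def by auto
  have "x \<otimes> y \<otimes> a = a \<otimes> (x \<otimes> y)" if a: "a \<in> carrier R" for a
  proof -
    have "x \<otimes> y \<otimes> a = x \<otimes> (y \<otimes> a)" using xc yc a by (simp add: m_assoc)
    also have "\<dots> = x \<otimes> (a \<otimes> y)" using yz a by simp
    also have "\<dots> = (x \<otimes> a) \<otimes> y" using xc yc a by (simp add: m_assoc)
    also have "\<dots> = (a \<otimes> x) \<otimes> y" using xz a by simp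
    also have "\<dots> = a \<otimes> (x \<otimes> y)" using xc yc a by (simp add: m_assoc)
    finally show ?thesis .
  qed
  then show ?thesis unfolding ring_center_def using xc yc by simp
qed

lemma (in ring) center_zero: "\<zero> \<in> ring_center R"
  unfolding ring_center_def by auto

lemma (in ring) center_one: "\<one> \<in> ring_center R"
  unfolding ring_center_def by auto

context UP_ring
begin

lemma monom_central:
  assumes c: "c \<in> ring_center R"
  shows "UM P c j \<in> ring_center P"
proof -
  have cc: "c \<in> carrier R" and cz: "\<And>x. x \<in> carrier R \<Longrightarrow> c \<otimes> x = x \<otimes> c"
    using c unfolding ring_center_def by auto
  have "UM P c j \<otimes>\<^bsub>P\<^esub> g = g \<otimes>\<^bsub>P\<^esub> UM P c j" if g: "g \<in> carrier P" for g
  proof (rule up_eqI)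
    fix n
    show "UC P (UM P c j \<otimes>\<^bsub>P\<^esub> g) n = UC P (g \<otimes>\<^bsub>P\<^esub> UM P c j) n"
      unfolding coeff_monom_mult_l[OF cc g] coeff_mult_monom_r[OF cc g] using cz g by simp
  qed (use cc g in auto)
  then show ?thesis unfolding ring_center_def using cc by simp
qed

lemma coeffs_central:
  assumes f: "f \<in> carrier P" and cf: "\<And>i. UC P f i \<in> ring_center R"
  shows "f \<in> ring_center P"
proof -
  have mc: "\<And>i. UM P (UC P f i) i \<in> ring_center P" using monom_central cf by blast
  have "f \<otimes>\<^bsub>P\<^esub> g = g \<otimes>\<^bsub>P\<^esub> f" if g: "g \<in> carrier P" for g
  proof -
    have "f \<otimes>\<^bsub>P\<^esub> g = (\<Oplus>\<^bsub>P\<^esub> i \<in> {..deg R f}. UM P (UC P f i) i) \<otimes>\<^bsub>P\<^esub> g"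
      using up_repr[OF f] by simp
    also have "\<dots> = (\<Oplus>\<^bsub>P\<^esub> i \<in> {..deg R f}. UM P (UC P f i) i \<otimes>\<^bsub>P\<^esub> g)"
      by (rule P.finsum_ldistr) (use f g in auto)
    also have "\<dots> = (\<Oplus>\<^bsub>P\<^esub> i \<in> {..deg R f}. g \<otimes>\<^bsub>P\<^esub> UM P (UC P f i) i)"
      by (rule P.finsum_cong') (use f g mc in \<open>auto simp: ring_center_def\<close>)
    also have "\<dots> = g \<otimes>\<^bsub>P\<^esub> (\<Oplus>\<^bsub>P\<^esub> i \<in> {..deg R f}. UM P (UC P f i) i)"
      by (rule P.finsum_rdistr[symmetric]) (use f g in auto)
    also have "\<dots> = g \<otimes>\<^bsub>P\<^esub> f" using up_repr[OF f] by simp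
    finally show ?thesis .
  qed
  then show ?thesis unfolding ring_center_def using f by simp
qed

definition ncf :: "(nat \<Rightarrow> 'a) \<Rightarrow> nat set" where
  "ncf f = {i. UC P f i \<notin> ring_center R}"

lemma ncf_finite: "f \<in> carrier P \<Longrightarrow> finite (ncf f)"
proof -
  assume f: "f \<in> carrier P"
  have "ncf f \<subseteq> {..deg R f}"
  proof
    fix i assume "i \<in> ncf f"
    then have "UC P f i \<noteq> \<zero>" using R.center_zero unfolding ncf_def by auto
    then show "i \<in> {..deg R f}" using deg_aboveD[OF _ f, of i] by (cases "deg R f < i") auto
  qed
  then show ?thesis using finite_subset by blast
qed

lemma ce_main:
  assumes ce: "\<And>a. a \<in> carrier R \<Longrightarrow> a \<notin> ring_center R \<Longrightarrow>
      \<exists>x\<in>ring_center R. \<exists>y\<in>ring_center R. x \<noteq> \<zero> \<and> y \<noteq> \<zero> \<and> a \<otimes> x = y"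
    and one: "\<one> \<noteq> \<zero>"
  shows "f \<in> carrier P \<Longrightarrow> f \<noteq> \<zero>\<^bsub>P\<^esub> \<Longrightarrow>
      \<exists>C\<in>ring_center P. f \<otimes>\<^bsub>P\<^esub> C \<in> ring_center P \<and> f \<otimes>\<^bsub>P\<^esub> C \<noteq> \<zero>\<^bsub>P\<^esub>"
proof (induction "card (ncf f)" arbitrary: f rule: less_induct)
  case less
  show ?case
  proof (cases "f \<in> ring_center P")
    case True
    then show ?thesis using less.prems P.center_one by (intro bexI[of _ "\<one>\<^bsub>P\<^esub>"]) auto
  next
    case False
    then obtain k where k: "UC P f k \<notin> ring_center R" using coeffs_central less.prems(1) by blast
    obtain c d where cd: "c \<in> ring_center R" "d \<in> ring_center R" "c \<noteq> \<zero>" "d \<noteq> \<zero>"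
      "UC P f k \<otimes> c = d"
      using ce[OF coeff_closed[OF less.prems(1)] k] by blast
    have cc: "c \<in> carrier R" using cd unfolding ring_center_def by auto
    define f' where "f' = f \<otimes>\<^bsub>P\<^esub> UM P c 0"
    have f'c: "f' \<in> carrier P" unfolding f'_def using less.prems cc by simp
    have co: "\<And>n. UC P f' n = UC P f n \<otimes> c"
      unfolding f'_def using coeff_mult_monom_r[OF cc less.prems(1), of 0] by simp
    have f'nz: "f' \<noteq> \<zero>\<^bsub>P\<^esub>"
    proof
      assume "f' = \<zero>\<^bsub>P\<^esub>"
      then have "UC P f' k = \<zero>" by simp
      then show False using co cd by simp
    qed
    have sub: "ncf f' \<subseteq> ncf f - {k}"
    proof
      fix i assume i: "i \<in> ncf f'"
      have "UC P f i \<notin> ring_center R"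
      proof
        assume "UC P f i \<in> ring_center R"
        then have "UC P f i \<otimes> c \<in> ring_center R" using R.center_mult cd by blast
        then show False using i co unfolding ncf_def by simp
      qed
      moreover have "i \<noteq> k" using i co cd unfolding ncf_def by auto
      ultimately show "i \<in> ncf f - {k}" unfolding ncf_def by simp
    qed
    have "card (ncf f') < card (ncf f)"
    proof -
      have "k \<in> ncf f" using k unfolding ncf_def by simp
      then have "card (ncf f - {k}) < card (ncf f)"
        using ncf_finite[OF less.prems(1)] by (meson card_Diff1_less)
      moreover have "card (ncf f') \<le> card (ncf f - {k})"
        using sub ncf_finite[OF less.prems(1)] by (simp add: card_mono)
      ultimately show ?thesis by simp
    qed
    then obtain C' where C': "C' \<in> ring_center P" "f' \<otimes>\<^bsub>P\<^esub> C' \<in> ring_center P" "f' \<otimes>\<^bsub>P\<^esub> C' \<noteq> \<zero>\<^bsub>P\<^esub>"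
      using less.hyps f'c f'nz by blast
    have C'c: "C' \<in> carrier P" using C' unfolding ring_center_def by auto
    define C where "C = UM P c 0 \<otimes>\<^bsub>P\<^esub> C'"
    have Cz: "C \<in> ring_center P" unfolding C_def using P.center_mult monom_central cd C' by blast
    have Ceq: "f \<otimes>\<^bsub>P\<^esub> C = f' \<otimes>\<^bsub>P\<^esub> C'"
      unfolding C_def f'_def using less.prems cc C'c by (simp add: P.m_assoc)
    show ?thesis
    proof (rule bexI[OF _ Cz])
      show "f \<otimes>\<^bsub>P\<^esub> C \<in> ring_center P \<and> f \<otimes>\<^bsub>P\<^esub> C \<noteq> \<zero>\<^bsub>P\<^esub>" unfolding Ceq using C' by simp
    qed
  qed
qed

lemma UP_centrally_essential:
  assumes ce: "centrally_essential R" and one: "\<one> \<noteq> \<zero>"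
  shows "centrally_essential P"
proof -
  have ce': "\<And>a. a \<in> carrier R \<Longrightarrow> a \<notin> ring_center R \<Longrightarrow>
      \<exists>x\<in>ring_center R. \<exists>y\<in>ring_center R. x \<noteq> \<zero> \<and> y \<noteq> \<zero> \<and> a \<otimes> x = y"
  proof -
    fix a assume a: "a \<in> carrier R" "a \<notin> ring_center R"
    show "\<exists>x\<in>ring_center R. \<exists>y\<in>ring_center R. x \<noteq> \<zero> \<and> y \<noteq> \<zero> \<and> a \<otimes> x = y"
    proof (cases "mult_commutative R")
      case True
      then have "a \<in> ring_center R" using a(1) unfolding mult_commutative_def ring_center_def by simp
      then show ?thesis using a(2) by simp
    next
      case False
      then have "\<forall>a \<in> carrier R. a \<notin> ring_center R \<longrightarrow>
        (\<exists>x \<in> ring_center R. \<exists>y \<in> ring_center R. x \<noteq> \<zero> \<and> y \<noteq> \<zero> \<and> a \<otimes> x = y)"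
        using ce unfolding centrally_essential_def by simp
      then show ?thesis using a by simp
    qed
  qed
  have "\<forall>f\<in>carrier P. f \<notin> ring_center P \<longrightarrow>
        (\<exists>x\<in>ring_center P. \<exists>y\<in>ring_center P. x \<noteq> \<zero>\<^bsub>P\<^esub> \<and> y \<noteq> \<zero>\<^bsub>P\<^esub> \<and> f \<otimes>\<^bsub>P\<^esub> x = y)"
  proof (intro ballI impI)
    fix f assume f: "f \<in> carrier P" "f \<notin> ring_center P"
    then have "f \<noteq> \<zero>\<^bsub>P\<^esub>" using P.center_zero by auto
    then obtain C where C: "C \<in> ring_center P" "f \<otimes>\<^bsub>P\<^esub> C \<in> ring_center P" "f \<otimes>\<^bsub>P\<^esub> C \<noteq> \<zero>\<^bsub>P\<^esub>"
      using ce_main[OF ce' one f(1)] by blast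
    have "C \<noteq> \<zero>\<^bsub>P\<^esub>"
    proof
      assume "C = \<zero>\<^bsub>P\<^esub>"
      then have "f \<otimes>\<^bsub>P\<^esub> C = \<zero>\<^bsub>P\<^esub>" using f(1) by simp
      then show False using C(3) by simp
    qed
    then show "\<exists>x\<in>ring_center P. \<exists>y\<in>ring_center P. x \<noteq> \<zero>\<^bsub>P\<^esub> \<and> y \<noteq> \<zero>\<^bsub>P\<^esub> \<and> f \<otimes>\<^bsub>P\<^esub> x = y"
      using C by blast
  qed
  then show ?thesis unfolding centrally_essential_def by blast
qed

end




lemma jac_addsub:
  assumes R: "ring A" shows "additive_subgroup (jacobson_radical A) A"
proof -
  interpret ring A by fact
  have Hm: "additive_subgroup m A" if "maximal_right_ideal m A" for m
    using that unfolding maximal_right_ideal_def right_ideal_def by blast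
  show ?thesis unfolding addsub_iff
  proof (intro conjI ballI)
    show "jacobson_radical A \<subseteq> carrier A" unfolding jacobson_radical_def by blast
    show "\<zero>\<^bsub>A\<^esub> \<in> jacobson_radical A" unfolding jacobson_radical_def
      using additive_subgroup.zero_closed[OF Hm] by blast
  next
    fix x y assume "x \<in> jacobson_radical A" "y \<in> jacobson_radical A"
    then show "x \<oplus>\<^bsub>A\<^esub> y \<in> jacobson_radical A" unfolding jacobson_radical_def
      using additive_subgroup.a_closed[OF Hm] by auto
  next
    fix x assume "x \<in> jacobson_radical A"
    then show "\<ominus>\<^bsub>A\<^esub> x \<in> jacobson_radical A" unfolding jacobson_radical_def
      using additive_subgroup.a_inv_closed[OF Hm] by auto
  qed
qed

lemma quot_comm:
  assumes R: "ring A" and comm: "\<And>a b. a \<in> carrier A \<Longrightarrow> b \<in> carrier A \<Longrightarrow>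
      a \<otimes>\<^bsub>A\<^esub> b \<ominus>\<^bsub>A\<^esub> b \<otimes>\<^bsub>A\<^esub> a \<in> jacobson_radical A"
  shows "mult_commutative (A Quot jacobson_radical A)"
proof -
  interpret ring A by fact
  let ?J = "jacobson_radical A"
  interpret J: abelian_subgroup ?J A
    by (rule abelian_subgroupI3[OF jac_addsub[OF R]]) (rule is_abelian_group)
  have eq: "?J +>\<^bsub>A\<^esub> (x \<otimes>\<^bsub>A\<^esub> y) = ?J +>\<^bsub>A\<^esub> (y \<otimes>\<^bsub>A\<^esub> x)"
    if "x \<in> carrier A" "y \<in> carrier A" for x y
  proof -
    have "x \<otimes>\<^bsub>A\<^esub> y \<in> ?J +>\<^bsub>A\<^esub> (y \<otimes>\<^bsub>A\<^esub> x)"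
      using J.a_rcos_module_minus[OF R, of "y \<otimes>\<^bsub>A\<^esub> x" "x \<otimes>\<^bsub>A\<^esub> y"] comm that by simp
    then show ?thesis using J.a_repr_independence'[of "x \<otimes>\<^bsub>A\<^esub> y" "y \<otimes>\<^bsub>A\<^esub> x"] that by simp
  qed
  show ?thesis unfolding mult_commutative_def
  proof (intro ballI)
    fix U1 V1 assume UV: "U1 \<in> carrier (A Quot ?J)" "V1 \<in> carrier (A Quot ?J)"
    then have UVc: "U1 \<subseteq> carrier A" "V1 \<subseteq> carrier A"
      using J.a_rcosets_carrier unfolding FactRing_def by auto
    have "(\<Union>x\<in>U1. \<Union>y\<in>V1. ?J +>\<^bsub>A\<^esub> (x \<otimes>\<^bsub>A\<^esub> y)) = (\<Union>y\<in>V1. \<Union>x\<in>U1. ?J +>\<^bsub>A\<^esub> (y \<otimes>\<^bsub>A\<^esub> x))"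
    proof -
      have "(\<Union>x\<in>U1. \<Union>y\<in>V1. ?J +>\<^bsub>A\<^esub> (x \<otimes>\<^bsub>A\<^esub> y)) = (\<Union>x\<in>U1. \<Union>y\<in>V1. ?J +>\<^bsub>A\<^esub> (y \<otimes>\<^bsub>A\<^esub> x))"
        using eq UVc by (intro SUP_cong refl) blast+
      also have "\<dots> = (\<Union>y\<in>V1. \<Union>x\<in>U1. ?J +>\<^bsub>A\<^esub> (y \<otimes>\<^bsub>A\<^esub> x))" by blast
      finally show ?thesis .
    qed
    then show "U1 \<otimes>\<^bsub>A Quot ?J\<^esub> V1 = V1 \<otimes>\<^bsub>A Quot ?J\<^esub> U1"
      unfolding FactRing_def rcoset_mult_def by simp
  qed
qed

theorem lemma2p2:
  fixes A :: "('a, 'm) ring_scheme"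
  assumes "ring A"
    and "\<one>\<^bsub>A\<^esub> \<noteq> \<zero>\<^bsub>A\<^esub>"
    and "centrally_essential A"
    and "\<not> mult_commutative (A Quot jacobson_radical A)"
  shows "centrally_essential (UP A) \<and> \<not> right_quasi_invariant (UP A) \<and> \<not> left_quasi_invariant (UP A)"
proof -
  interpret U: UP_ring A "UP A" using assms(1) by (simp add: UP_ring_def)
  have ce: "centrally_essential (UP A)" by (rule U.UP_centrally_essential[OF assms(3) assms(2)])
  obtain a b where ab: "a \<in> carrier A" "b \<in> carrier A"
    "a \<otimes>\<^bsub>A\<^esub> b \<ominus>\<^bsub>A\<^esub> b \<otimes>\<^bsub>A\<^esub> a \<notin> jacobson_radical A"
    using quot_comm[OF assms(1)] assms(4) by blast
  have tc: "a \<otimes>\<^bsub>A\<^esub> b \<ominus>\<^bsub>A\<^esub> b \<otimes>\<^bsub>A\<^esub> a \<in> carrier A" using ab by simp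
  obtain m where m: "maximal_right_ideal m A" "a \<otimes>\<^bsub>A\<^esub> b \<ominus>\<^bsub>A\<^esub> b \<otimes>\<^bsub>A\<^esub> a \<notin> m"
    using ab(3) tc unfolding jacobson_radical_def by blast
  obtain l where l: "maximal_left_ideal l A" "a \<otimes>\<^bsub>A\<^esub> b \<ominus>\<^bsub>A\<^esub> b \<otimes>\<^bsub>A\<^esub> a \<notin> l"
    using ring.jac_left[OF assms(1) tc ab(3)] by blast
  have "\<not> right_quasi_invariant (UP A)" by (rule U.not_rqi[OF m(1) ab(1,2) m(2)])
  moreover have "\<not> left_quasi_invariant (UP A)" by (rule U.not_lqi[OF l(1) ab(1,2) l(2)])
  ultimately show ?thesis using ce by blast
qed



end
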